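(* Let $N=pq$ where $p<q$ are primes. Let $f\in\mathbb{Z}[X]$ and $d:=\deg f$. Let $n$ be the number of distinct zeros of $f$ modulo $p$ and $m$ the number of distinct zeros of $f$ modulo $q$. Then: (1) $\nu(f)=mp+nq-2nm$. (2) If $f\neq 0$ in $\mathbb{Z}_p[X]$ and in $\mathbb{Z}_q[X]$, and $d<p/2$, then $\nu(f)\leq dp+dq-2d^2$.
   Context: $Z_N=\{0,1,\dots,N-1\}$ and $\mathbb{Z}_n=\mathbb{Z}/n\mathbb{Z}$. For $g\in\mathbb{Z}[X]$, an element $x\in Z_N$ is called suitable for $g$ if $1<\gcd(g(x),N)<N$, and $\nu(g)$ denotes the number of $x\in Z_N$ suitable for $g$. *)

theory Defs
  imports "HOL-Computational_Algebra.Polynomial" "HOL-Number_Theory.Cong"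
begin

definition suitable :: "nat \<Rightarrow> int poly \<Rightarrow> nat \<Rightarrow> bool" where
  "suitable N g x \<longleftrightarrow> 1 < gcd (poly g (int x)) (int N) \<and> gcd (poly g (int x)) (int N) < int N"

definition nu :: "nat \<Rightarrow> int poly \<Rightarrow> nat" where
  "nu N g = card {x \<in> {0..<N}. suitable N g x}"

definition num_zeros_mod :: "nat \<Rightarrow> int poly \<Rightarrow> nat" where
  "num_zeros_mod r f = card {x \<in> {0..<r}. [poly f (int x) = 0] (mod int r)}"

definition nonzero_mod :: "nat \<Rightarrow> int poly \<Rightarrow> bool" where
  "nonzero_mod r f \<longleftrightarrow> (\<exists>i. \<not> int r dvd coeff f i)"

end

theory Submission
  imports Defs
begin

lemma poly_cong_int:
  fixes f :: "int poly"
  assumes "[a = b] (mod m)"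
  shows "[poly f a = poly f b] (mod m)"
proof (induction f)
  case 0 then show ?case by simp
next
  case (pCons c f)
  then show ?case using assms by (simp add: cong_add cong_mult)
qed

lemma roots_bound:
  fixes f :: "int poly" and p :: nat
  assumes "prime p" "\<exists>i. \<not> int p dvd coeff f i"
  shows "card {x \<in> {0..<p}. int p dvd poly f (int x)} \<le> degree f"
  using assms(2)
proof (induction "degree f" arbitrary: f rule: less_induct)
  case less
  show ?case
  proof (cases "{x \<in> {0..<p}. int p dvd poly f (int x)} = {}")
    case True then show ?thesis by (simp only: card.empty)
  next
    case False
    then obtain a where a: "a < p" "int p dvd poly f (int a)" by auto
    define g where "g = synthetic_div f (int a)"
    have feq: "f = [:- int a, 1:] * g + [:poly f (int a):]"
      unfolding g_def by (rule synthetic_div_correct'[symmetric])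
    have pf: "poly f y = (y - int a) * poly g y + poly f (int a)" for y
      by (subst feq) (simp add: algebra_simps)
    have degpos: "degree f \<noteq> 0"
    proof
      assume d0: "degree f = 0"
      then obtain c where "f = [:c:]" by (metis degree_eq_zeroE)
      then show False using less.prems a(2)
        by (auto simp: coeff_pCons split: nat.splits) (metis gr0_conv_Suc)
    qed
    have degg: "degree g < degree f" unfolding g_def using degpos
      by (simp add: degree_synthetic_div)
    have gnz: "\<exists>i. \<not> int p dvd coeff g i"
    proof (rule ccontr)
      assume "\<not> (\<exists>i. \<not> int p dvd coeff g i)"
      then have all: "\<And>i. int p dvd coeff g i" by blast
      have "int p dvd coeff f i" for i
      proof -
        have "coeff f i = coeff ([:- int a, 1:] * g) i + coeff [:poly f (int a):] i"
          by (subst feq) simp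
        also have "\<dots> = - int a * coeff g i + coeff (pCons 0 g) i + coeff [:poly f (int a):] i"
          by (simp add: mult_pCons_left)
        finally show ?thesis using all a(2)
          by (cases i) (auto simp: coeff_pCons)
      qed
      then show False using less.prems by blast
    qed
    have pp: "prime (int p)" using assms(1) by simp
    have sub: "{x \<in> {0..<p}. int p dvd poly f (int x)} \<subseteq>
               insert a {x \<in> {0..<p}. int p dvd poly g (int x)}"
    proof
      fix x assume x: "x \<in> {x \<in> {0..<p}. int p dvd poly f (int x)}"
      then have "int p dvd (int x - int a) * poly g (int x)"
        using pf[of "int x"] a(2) x by (metis (no_types, lifting) dvd_add_left_iff mem_Collect_eq)
      then have "int p dvd (int x - int a) \<or> int p dvd poly g (int x)"
        using pp prime_dvd_mult_iff by blast
      moreover have "int p dvd (int x - int a) \<Longrightarrow> x = a"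
      proof -
        assume "int p dvd (int x - int a)"
        then have "[int x = int a] (mod int p)" by (simp add: cong_iff_dvd_diff)
        moreover have "int x < int p" "int a < int p" using x a(1) by auto
        ultimately have "int x = int a" using cong_less_imp_eq_int[of "int x" "int p" "int a"] by simp
        then show "x = a" by simp
      qed
      ultimately show "x \<in> insert a {x \<in> {0..<p}. int p dvd poly g (int x)}" using x by auto
    qed
    have "card {x \<in> {0..<p}. int p dvd poly f (int x)} \<le>
          card (insert a {x \<in> {0..<p}. int p dvd poly g (int x)})"
      by (rule card_mono[OF _ sub]) simp
    also have "\<dots> \<le> Suc (card {x \<in> {0..<p}. int p dvd poly g (int x)})"
      by (simp add: card_insert_le_m1)
    also have "\<dots> \<le> Suc (degree g)" using less.hyps[OF degg gnz] by simp
    finally show ?thesis using degg by simp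
  qed
qed


lemma gcd_lem:
  fixes g :: int and p q :: nat
  assumes "prime p" "prime q" "p \<noteq> q"
  shows "(1 < gcd g (int (p*q)) \<and> gcd g (int (p*q)) < int (p*q)) \<longleftrightarrow> ((int p dvd g) \<noteq> (int q dvd g))"
proof -
  define G where "G = gcd g (int p * int q)"
  have pp: "prime (int p)" and pq: "prime (int q)" using assms by auto
  have ne: "int p \<noteq> int q" using assms(3) by simp
  have cop: "coprime (int p) (int q)" using primes_coprime[OF pp pq ne] .
  have p1: "1 < int p" using prime_gt_1_int[OF pp] .
  have q1: "1 < int q" using prime_gt_1_int[OF pq] .
  have pos: "int p * int q > 0" using p1 q1 by simp
  have gd: "G dvd int p * int q" unfolding G_def by (rule gcd_dvd2)
  have gp: "G > 0" unfolding G_def using p1 q1 by simp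
  have gle: "G \<le> int p * int q" using zdvd_imp_le[OF gd pos] .
  have eqG: "gcd g (int (p*q)) = G" unfolding G_def by simp
  have iff: "(1 < G \<and> G < int p * int q) \<longleftrightarrow> ((int p dvd g) \<noteq> (int q dvd g))"
  proof (cases "int p dvd g"; cases "int q dvd g")
    assume 1: "int p dvd g" "int q dvd g"
    have "int p * int q dvd g" using divides_mult[OF 1 cop] .
    then have "G = \<bar>int p * int q\<bar>" unfolding G_def by (rule gcd_proj2_if_dvd_int)
    then have "G = int p * int q" using pos by simp
    then show ?thesis using 1 by simp
  next
    assume 2: "int p dvd g" "\<not> int q dvd g"
    have "int p dvd G" unfolding G_def using 2(1) by simp
    then have a: "int p \<le> G" using zdvd_imp_le[OF _ gp] by blast
    have "G \<noteq> int p * int q"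
    proof
      assume e: "G = int p * int q"
      have "G dvd g" unfolding G_def by (rule gcd_dvd1)
      then have "int p * int q dvd g" using e by simp
      moreover have "int q dvd int p * int q" by simp
      ultimately have "int q dvd g" using dvd_trans by blast
      then show False using 2(2) by blast
    qed
    then have "1 < G \<and> G < int p * int q" using a gle p1 by linarith
    then show ?thesis using 2 by simp
  next
    assume 3: "\<not> int p dvd g" "int q dvd g"
    have "int q dvd G" unfolding G_def using 3(2) by simp
    then have a: "int q \<le> G" using zdvd_imp_le[OF _ gp] by blast
    have "G \<noteq> int p * int q"
    proof
      assume e: "G = int p * int q"
      have "G dvd g" unfolding G_def by (rule gcd_dvd1)
      then have "int p * int q dvd g" using e by simp
      moreover have "int p dvd int p * int q" by simp
      ultimately have "int p dvd g" using dvd_trans by blast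
      then show False using 3(1) by blast
    qed
    then have "1 < G \<and> G < int p * int q" using a gle q1 by linarith
    then show ?thesis using 3 by simp
  next
    assume 4: "\<not> int p dvd g" "\<not> int q dvd g"
    have c1: "coprime (int p) g" using prime_imp_coprime[OF pp 4(1)] .
    have c2: "coprime (int q) g" using prime_imp_coprime[OF pq 4(2)] .
    have "coprime (int p * int q) g" using c1 c2 by simp
    then have "coprime g (int p * int q)" by (simp add: coprime_commute)
    then have "G = 1" unfolding G_def by simp
    then show ?thesis using 4 by simp
  qed
  show ?thesis using iff eqG by simp
qed

lemma crt_count:
  fixes p q :: nat and P Q :: "nat \<Rightarrow> bool"
  assumes cop: "coprime p q" and p0: "p > 0" and q0: "q > 0"
  shows "card {x \<in> {0..<p*q}. P (x mod p) \<noteq> Q (x mod q)} =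
         card {a \<in> {0..<p}. P a} * (q - card {b \<in> {0..<q}. Q b}) +
         (p - card {a \<in> {0..<p}. P a}) * card {b \<in> {0..<q}. Q b}"
proof -
  define h where "h x = (x mod p, x mod q)" for x
  have inj: "inj_on h {0..<p*q}"
  proof (rule inj_onI)
    fix x y assume x: "x \<in> {0..<p*q}" and y: "y \<in> {0..<p*q}" and e: "h x = h y"
    then have "[x = y] (mod p)" "[x = y] (mod q)" by (auto simp: h_def cong_def)
    then have "[x = y] (mod p*q)" using cop by (simp add: coprime_cong_mult_nat)
    moreover have "x < p*q" "y < p*q" using x y by auto
    ultimately show "x = y" using cong_less_imp_eq_nat[of x "p*q" y] by simp
  qed
  have sub: "h ` {0..<p*q} \<subseteq> {0..<p} \<times> {0..<q}" using p0 q0 by (auto simp: h_def)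
  have img: "h ` {0..<p*q} = {0..<p} \<times> {0..<q}"
    by (rule card_subset_eq[OF _ sub]) (auto simp: card_image[OF inj] card_cartesian_product)
  define R where "R y = (P (fst y) \<noteq> Q (snd y))" for y
  have "{x \<in> {0..<p*q}. P (x mod p) \<noteq> Q (x mod q)} = {x \<in> {0..<p*q}. R (h x)}"
    by (simp add: R_def h_def)
  moreover have "h ` {x \<in> {0..<p*q}. R (h x)} = {y \<in> {0..<p} \<times> {0..<q}. R y}"
  proof -
    have "h ` {x \<in> {0..<p*q}. R (h x)} = {y \<in> h ` {0..<p*q}. R y}" by auto
    then show ?thesis unfolding img .
  qed
  moreover have "card (h ` {x \<in> {0..<p*q}. R (h x)}) = card {x \<in> {0..<p*q}. R (h x)}"
    by (rule card_image, rule inj_on_subset[OF inj]) auto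
  ultimately have c1: "card {x \<in> {0..<p*q}. P (x mod p) \<noteq> Q (x mod q)} = card {y \<in> {0..<p} \<times> {0..<q}. R y}"
    by simp
  define SP where "SP = {a \<in> {0..<p}. P a}"
  define SQ where "SQ = {b \<in> {0..<q}. Q b}"
  have "{y \<in> {0..<p} \<times> {0..<q}. R y} = (SP \<times> ({0..<q} - SQ)) \<union> (({0..<p} - SP) \<times> SQ)"
    by (auto simp: R_def SP_def SQ_def)
  moreover have "(SP \<times> ({0..<q} - SQ)) \<inter> (({0..<p} - SP) \<times> SQ) = {}" by auto
  moreover have "finite SP" "finite SQ" by (auto simp: SP_def SQ_def)
  moreover have "SP \<subseteq> {0..<p}" "SQ \<subseteq> {0..<q}" by (auto simp: SP_def SQ_def)
  ultimately have "card {y \<in> {0..<p} \<times> {0..<q}. R y} = card SP * (q - card SQ) + (p - card SP) * card SQ"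
    by (simp add: card_Un_disjoint card_cartesian_product card_Diff_subset)
  then show ?thesis using c1 by (simp add: SP_def SQ_def)
qed

theorem theorem2p8:
  fixes p q N :: nat and f :: "int poly"
  assumes "prime p" and "prime q" and "p < q" and "N = p * q"
  defines "d \<equiv> degree f"
      and "n \<equiv> num_zeros_mod p f"
      and "m \<equiv> num_zeros_mod q f"
  shows "int (nu N f) = int m * int p + int n * int q - 2 * int n * int m \<and>
         (nonzero_mod p f \<and> nonzero_mod q f \<and> real d < real p / 2 \<longrightarrow>
          int (nu N f) \<le> int d * int p + int d * int q - 2 * int d ^ 2)"
proof -
  have p0: "p > 0" and q0: "q > 0" using assms(1,2) by (auto simp: prime_gt_0_nat)
  have pq: "p \<noteq> q" using assms(3) by simp
  have cop: "coprime p q" using assms(1,2) pq by (simp add: primes_coprime)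
  define P where "P a = (int p dvd poly f (int a))" for a
  define Q where "Q b = (int q dvd poly f (int b))" for b
  have Pm: "int p dvd poly f (int x) \<longleftrightarrow> P (x mod p)" for x
  proof -
    have "[int x = int (x mod p)] (mod int p)" by (simp add: cong_def zmod_int)
    then have "[poly f (int x) = poly f (int (x mod p))] (mod int p)" by (rule poly_cong_int)
    then show ?thesis unfolding P_def using cong_dvd_iff by blast
  qed
  have Qm: "int q dvd poly f (int x) \<longleftrightarrow> Q (x mod q)" for x
  proof -
    have "[int x = int (x mod q)] (mod int q)" by (simp add: cong_def zmod_int)
    then have "[poly f (int x) = poly f (int (x mod q))] (mod int q)" by (rule poly_cong_int)
    then show ?thesis unfolding Q_def using cong_dvd_iff by blast
  qed
  have suit: "suitable N f x \<longleftrightarrow> P (x mod p) \<noteq> Q (x mod q)" for x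
    unfolding suitable_def assms(4) using gcd_lem[OF assms(1,2) pq, of "poly f (int x)"] Pm Qm
    by simp
  have nuc: "nu N f = card {x \<in> {0..<p*q}. P (x mod p) \<noteq> Q (x mod q)}"
    unfolding nu_def using suit assms(4) by simp
  have nd: "n = card {a \<in> {0..<p}. P a}" unfolding n_def num_zeros_mod_def P_def
    by (simp add: cong_0_iff)
  have md: "m = card {b \<in> {0..<q}. Q b}" unfolding m_def num_zeros_mod_def Q_def
    by (simp add: cong_0_iff)
  have np: "n \<le> p" unfolding nd using card_mono[of "{0..<p}" "{a \<in> {0..<p}. P a}"] by fastforce
  have mq: "m \<le> q" unfolding md using card_mono[of "{0..<q}" "{a \<in> {0..<q}. Q a}"] by fastforce
  have nu_eq: "nu N f = n * (q - m) + (p - n) * m"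
    using crt_count[OF cop p0 q0, of P Q] nuc nd md by simp
  have part1: "int (nu N f) = int m * int p + int n * int q - 2 * int n * int m"
    unfolding nu_eq of_nat_add of_nat_mult of_nat_diff[OF mq] of_nat_diff[OF np] by (simp add: algebra_simps)
  have part2: "int (nu N f) \<le> int d * int p + int d * int q - 2 * int d ^ 2"
    if nzp: "nonzero_mod p f" and nzq: "nonzero_mod q f" and dp: "real d < real p / 2"
  proof -
    have nd': "n \<le> d" unfolding nd P_def d_def
      using roots_bound[OF assms(1)] nzp unfolding nonzero_mod_def by blast
    have md': "m \<le> d" unfolding md Q_def d_def
      using roots_bound[OF assms(2)] nzq unfolding nonzero_mod_def by blast
    have "real (2 * d) < real p" using dp by simp
    then have d2: "2 * d < p" by (simp only: of_nat_less_iff)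
    have d2i: "2 * int d < int p" using d2 by linarith
    have ndi: "int n \<le> int d" "int m \<le> int d" using nd' md' by simp_all
    have pqi: "int p < int q" using assms(3) by simp
    have h1: "0 \<le> (int d - int n) * (int q - 2 * int d)"
      by (rule mult_nonneg_nonneg) (use ndi d2i pqi in linarith)+
    have h2: "0 \<le> (int d - int m) * (int p - 2 * int n)"
      by (rule mult_nonneg_nonneg) (use ndi d2i in linarith)+
    have "int d * int p + int d * int q - 2 * int d ^ 2 - (int m * int p + int n * int q - 2 * int n * int m)
          = (int d - int n) * (int q - 2 * int d) + (int d - int m) * (int p - 2 * int n)"
      by (simp add: algebra_simps power2_eq_square)
    then show ?thesis using h1 h2 part1 by linarith
  qed
  show ?thesis using part1 part2 by blast
qed


end
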